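(* Let $G$ be a complete geometric graph and let $B$ be a blocker for $\mathcal{T}_{\leq 4}(G)$. Let $b$ be a boundary vertex of $G$, and let $[a,b]$ and $[b,c]$ be the two boundary edges of $G$ containing $b$. If at least one of $[a,b]$, $[b,c]$ is not in $B$, then $b$ is a leaf of $B$ (i.e., has degree exactly 1 in $B$).
   Context: A geometric graph is a graph whose vertices are points in the plane in general position (no three collinear) and whose edges are straight segments between pairs of vertices; $G$ is complete if all pairs of vertices are joined. Boundary vertices and boundary edges of $G$ are those lying on the boundary of the convex hull of $V(G)$. $\mathcal{T}_{\leq k}(G)$ denotes the family of all simple (non-crossing) spanning trees of $G$ of (graph) diameter at most $k$. A subgraph $B$ blocks a family $\mathcal{F}$ of subgraphs if it shares at least one edge with every member of $\mathcal{F}$; a blocker of $\mathcal{F}$ is a subgraph that blocks $\mathcal{F}$ and has the smallest possible number of edges among all subgraphs blocking $\mathcal{F}$. *)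

theory Defs
  imports "HOL-Analysis.Analysis"
begin

type_synonym pt = "real^2"

text \<open>Edges of a geometric graph are 2-element sets of points; the edge {p,q} is drawn as the
  segment convex hull {p,q} = closed_segment p q.\<close>

definition general_position :: "pt set \<Rightarrow> bool" where
  "general_position V \<longleftrightarrow>
     (\<forall>p\<in>V. \<forall>q\<in>V. \<forall>r\<in>V. p \<noteq> q \<and> q \<noteq> r \<and> p \<noteq> r \<longrightarrow> \<not> collinear {p, q, r})"

definition complete_edges :: "pt set \<Rightarrow> pt set set" where
  "complete_edges V = {{p, q} | p q. p \<in> V \<and> q \<in> V \<and> p \<noteq> q}"

definition boundary_vertex :: "pt set \<Rightarrow> pt \<Rightarrow> bool" where
  "boundary_vertex V v \<longleftrightarrow> v \<in> V \<and> v \<in> frontier (convex hull V)"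

definition boundary_edge :: "pt set \<Rightarrow> pt \<Rightarrow> pt \<Rightarrow> bool" where
  "boundary_edge V p q \<longleftrightarrow> p \<in> V \<and> q \<in> V \<and> p \<noteq> q \<and>
     closed_segment p q \<subseteq> frontier (convex hull V)"

definition walk :: "pt set set \<Rightarrow> pt list \<Rightarrow> bool" where
  "walk T xs \<longleftrightarrow> xs \<noteq> [] \<and> (\<forall>i. Suc i < length xs \<longrightarrow> {xs ! i, xs ! Suc i} \<in> T)"

definition reach_within :: "pt set set \<Rightarrow> nat \<Rightarrow> pt \<Rightarrow> pt \<Rightarrow> bool" where
  "reach_within T k u v \<longleftrightarrow>
     (\<exists>xs. walk T xs \<and> hd xs = u \<and> last xs = v \<and> length xs \<le> Suc k)"

definition graph_connected :: "pt set \<Rightarrow> pt set set \<Rightarrow> bool" where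
  "graph_connected V T \<longleftrightarrow> (\<forall>u\<in>V. \<forall>v\<in>V. \<exists>k. reach_within T k u v)"

definition spanning_tree :: "pt set \<Rightarrow> pt set set \<Rightarrow> bool" where
  "spanning_tree V T \<longleftrightarrow> T \<subseteq> complete_edges V \<and> graph_connected V T \<and> card T = card V - 1"

definition noncrossing :: "pt set set \<Rightarrow> bool" where
  "noncrossing T \<longleftrightarrow> (\<forall>e\<in>T. \<forall>f\<in>T. e \<noteq> f \<longrightarrow> convex hull e \<inter> convex hull f \<subseteq> e \<inter> f)"

definition diam_le :: "pt set \<Rightarrow> pt set set \<Rightarrow> nat \<Rightarrow> bool" where
  "diam_le V T k \<longleftrightarrow> (\<forall>u\<in>V. \<forall>v\<in>V. reach_within T k u v)"

definition trees_le :: "pt set \<Rightarrow> nat \<Rightarrow> pt set set set" where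
  "trees_le V k = {T. spanning_tree V T \<and> noncrossing T \<and> diam_le V T k}"

definition blocks :: "pt set set \<Rightarrow> pt set set set \<Rightarrow> bool" where
  "blocks B F \<longleftrightarrow> (\<forall>T\<in>F. B \<inter> T \<noteq> {})"

definition is_blocker :: "pt set \<Rightarrow> pt set set set \<Rightarrow> pt set set \<Rightarrow> bool" where
  "is_blocker V F B \<longleftrightarrow> B \<subseteq> complete_edges V \<and> blocks B F \<and>
     (\<forall>B'. B' \<subseteq> complete_edges V \<and> blocks B' F \<longrightarrow> card B \<le> card B')"

definition degree :: "pt set set \<Rightarrow> pt \<Rightarrow> nat" where
  "degree B v = card {e \<in> B. v \<in> e}"

end

theory Submission
  imports Defs
begin


definition det2 :: "pt \<Rightarrow> pt \<Rightarrow> real" where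
  "det2 u v = u$1 * v$2 - u$2 * v$1"

lemma det2_zero [simp]: "det2 u 0 = 0" "det2 0 u = 0"
  unfolding det2_def by simp_all

lemma det2_par:
  assumes "det2 x y = 0" "x \<noteq> 0"
  shows "\<exists>c. y = c *\<^sub>R x"
proof -
  have "x$1 \<noteq> 0 \<or> x$2 \<noteq> 0" using assms(2) by (auto simp: vec_eq_iff forall_2)
  thus ?thesis
  proof
    assume h: "x$1 \<noteq> 0"
    have "y$2 = (y$1 / x$1) * x$2" using h assms(1) unfolding det2_def by (simp add: field_simps)
    moreover have "y$1 = (y$1 / x$1) * x$1" using h by simp
    ultimately show ?thesis by (intro exI[of _ "y$1 / x$1"]) (simp add: vec_eq_iff forall_2)
  next
    assume h: "x$2 \<noteq> 0"
    have "y$1 = (y$2 / x$2) * x$1" using h assms(1) unfolding det2_def by (simp add: field_simps)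
    moreover have "y$2 = (y$2 / x$2) * x$2" using h by simp
    ultimately show ?thesis by (intro exI[of _ "y$2 / x$2"]) (simp add: vec_eq_iff forall_2)
  qed
qed

lemma det2_collinear:
  fixes p q r :: pt
  assumes "det2 (q - p) (r - p) = 0"
  shows "collinear {p, q, r}"
proof -
  have "collinear {0, q - p, r - p}"
  proof (cases "q - p = 0")
    case True thus ?thesis by (simp add: collinear_lemma)
  next
    case False
    thus ?thesis using det2_par[OF assms False] by (simp add: collinear_lemma)
  qed
  hence "collinear {q, p, r}" using collinear_3[of q p r] by simp
  moreover have "{q, p, r} = {p, q, r}" by auto
  ultimately show ?thesis by simp
qed

lemma det2_lin:
  "det2 w ((1 - u) *\<^sub>R p + u *\<^sub>R q - a) = (1 - u) * det2 w (p - a) + u * det2 w (q - a)"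
  unfolding det2_def by (simp add: algebra_simps)

lemma det2_lin2:
  "det2 ((1 - u) *\<^sub>R p + u *\<^sub>R q - a) w = (1 - u) * det2 (p - a) w + u * det2 (q - a) w"
  unfolding det2_def by (simp add: algebra_simps)

lemma det2_anti: "det2 u v = - det2 v u"
  unfolding det2_def by simp

lemma det2_self: "det2 u u = 0"
  unfolding det2_def by simp

lemma det2_ident:
  "det2 u v * det2 e w + det2 v w * det2 e u + det2 w u * det2 e v = 0"
  unfolding det2_def by (simp add: algebra_simps)

lemma det2_inner:
  "(det2 e l) * det2 e z = (e$1*e$1 + e$2*e$2) * (l \<bullet> z) - (l \<bullet> e) * (e \<bullet> z)"
  unfolding det2_def by (simp add: inner_vec_def sum_2 algebra_simps)

lemma common_endpoint:
  fixes p q r z :: pt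
  assumes "\<not> collinear {p, q, r}"
    and "z \<in> closed_segment p q" and "z \<in> closed_segment p r"
  shows "z = p"
proof -
  have d: "det2 (q - p) (r - p) \<noteq> 0" using assms(1) det2_collinear by blast
  obtain s where s: "0 \<le> s" "s \<le> 1" "z = (1 - s) *\<^sub>R p + s *\<^sub>R q" using assms(2) in_segment(1) by blast
  obtain t where t: "0 \<le> t" "t \<le> 1" "z = (1 - t) *\<^sub>R p + t *\<^sub>R r" using assms(3) in_segment(1) by blast
  have "det2 (q - p) (z - p) = s * det2 (q - p) (q - p)"
    using det2_lin[of "q-p" s p q p] s(3) by (simp add: det2_self)
  hence 1: "det2 (q - p) (z - p) = 0" by (simp add: det2_self)
  have "det2 (q - p) (z - p) = t * det2 (q - p) (r - p)"
    using det2_lin[of "q-p" t p r p] t(3) by (simp add: det2_self)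
  with 1 d have "t = 0" by simp
  thus ?thesis using t by simp
qed




lemma walk_single: "walk T [x]"
  by (simp add: walk_def)

lemma walk_Cons:
  assumes "zs \<noteq> []"
  shows "walk T (x # zs) \<longleftrightarrow> walk T zs \<and> {x, hd zs} \<in> T"
proof
  assume h: "walk T (x # zs)"
  have "{x, hd zs} \<in> T" using h assms unfolding walk_def
    by (metis hd_conv_nth length_Cons length_greater_0_conv nth_Cons_0 nth_Cons_Suc zero_less_Suc Suc_less_eq)
  moreover have "walk T zs" using h assms unfolding walk_def
    by (metis Suc_less_eq length_Cons nth_Cons_Suc)
  ultimately show "walk T zs \<and> {x, hd zs} \<in> T" by simp
next
  assume h: "walk T zs \<and> {x, hd zs} \<in> T"
  show "walk T (x # zs)" unfolding walk_def
  proof (intro conjI allI impI)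
    fix i assume i: "Suc i < length (x # zs)"
    show "{(x # zs) ! i, (x # zs) ! Suc i} \<in> T"
    proof (cases i)
      case 0 thus ?thesis using h assms by (simp add: hd_conv_nth)
    next
      case (Suc j) thus ?thesis using h i unfolding walk_def by simp
    qed
  qed simp
qed

lemma walk_append:
  assumes "walk T xs" "walk T ys" "last xs = hd ys"
  shows "walk T (xs @ tl ys)"
  using assms
proof (induction xs)
  case Nil thus ?case by (simp add: walk_def)
next
  case (Cons x xs)
  show ?case
  proof (cases "xs = []")
    case True
    have "ys \<noteq> []" using Cons.prems(2) by (simp add: walk_def)
    thus ?thesis using True Cons.prems by (cases ys) auto
  next
    case False
    have w: "walk T xs" "{x, hd xs} \<in> T" using Cons.prems(1) walk_Cons[OF False] by auto
    have "walk T (xs @ tl ys)" using Cons.IH[OF w(1) Cons.prems(2)] Cons.prems(3) False by simp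
    moreover have "xs @ tl ys \<noteq> []" using False by simp
    moreover have "hd (xs @ tl ys) = hd xs" using False by simp
    ultimately show ?thesis using w(2) walk_Cons by (metis append_Cons)
  qed
qed

lemma walk_rev:
  assumes "walk T xs"
  shows "walk T (rev xs)"
  unfolding walk_def
proof (intro conjI allI impI)
  show "rev xs \<noteq> []" using assms by (simp add: walk_def)
  fix i assume i: "Suc i < length (rev xs)"
  define j where "j = length xs - Suc (Suc i)"
  have j: "Suc j < length xs" using i unfolding j_def by simp
  have e1: "rev xs ! i = xs ! Suc j" using i unfolding j_def by (simp add: rev_nth Suc_diff_Suc)
  have e2: "rev xs ! Suc i = xs ! j" using i unfolding j_def by (simp add: rev_nth)
  show "{rev xs ! i, rev xs ! Suc i} \<in> T" using assms j e1 e2 unfolding walk_def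
    by (metis insert_commute)
qed

lemma reach_refl: "reach_within T k u u"
  unfolding reach_within_def by (rule exI[of _ "[u]"]) (simp add: walk_def)

lemma reach_edge: "{u, v} \<in> T \<Longrightarrow> reach_within T 1 u v"
  unfolding reach_within_def by (rule exI[of _ "[u,v]"]) (simp add: walk_def)

lemma reach_mono: "reach_within T k u v \<Longrightarrow> k \<le> m \<Longrightarrow> reach_within T m u v"
  unfolding reach_within_def by force

lemma reach_sym: "reach_within T k u v \<Longrightarrow> reach_within T k v u"
  unfolding reach_within_def
  by (metis hd_rev last_rev length_rev walk_rev)

lemma reach_trans:
  assumes "reach_within T k u w" "reach_within T m w v"
  shows "reach_within T (k + m) u v"
proof -
  obtain xs where xs: "walk T xs" "hd xs = u" "last xs = w" "length xs \<le> Suc k"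
    using assms(1) unfolding reach_within_def by blast
  obtain ys where ys: "walk T ys" "hd ys = w" "last ys = v" "length ys \<le> Suc m"
    using assms(2) unfolding reach_within_def by blast
  have ne: "xs \<noteq> []" "ys \<noteq> []" using xs ys by (auto simp: walk_def)
  have "walk T (xs @ tl ys)" using walk_append xs ys by simp
  moreover have "hd (xs @ tl ys) = u" using ne xs by simp
  moreover have "last (xs @ tl ys) = v"
  proof (cases "tl ys = []")
    case True
    then have "ys = [hd ys]" using ne by (cases ys) auto
    then have "v = w" using ys by (metis last.simps)
    thus ?thesis using True xs by simp
  next
    case False thus ?thesis using ys ne by (simp add: last_tl)
  qed
  moreover have "length (xs @ tl ys) \<le> Suc (k + m)" using xs ys ne by simp
  ultimately show ?thesis unfolding reach_within_def by blast
qed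

lemma reach_step:
  assumes "reach_within T k u w" "{w, v} \<in> T"
  shows "reach_within T (Suc k) u v"
  using reach_trans[OF assms(1) reach_edge[OF assms(2)]] by simp

lemma reach_zero: "reach_within T 0 u v \<Longrightarrow> u = v"
  unfolding reach_within_def walk_def
  by (metis Suc_le_length_iff hd_conv_nth last_conv_nth le_Suc_eq le_zero_eq length_0_conv diff_Suc_1 not_less_eq_eq)

lemma reach_pred:
  assumes "reach_within T k u v" "u \<noteq> v"
  shows "\<exists>w. k \<ge> 1 \<and> reach_within T (k - 1) u w \<and> {w, v} \<in> T"
proof -
  obtain xs where xs: "walk T xs" "hd xs = u" "last xs = v" "length xs \<le> Suc k"
    using assms(1) unfolding reach_within_def by blast
  have ne: "xs \<noteq> []" using xs by (simp add: walk_def)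
  have len: "length xs \<ge> 2"
  proof (rule ccontr)
    assume "\<not> 2 \<le> length xs"
    then have "length xs = 1" using ne by (metis One_nat_def Suc_1 le_SucE length_greater_0_conv not_less_eq_eq Suc_leI)
    then have "hd xs = last xs" by (cases xs) auto
    thus False using xs assms(2) by simp
  qed
  define w where "w = xs ! (length xs - 2)"
  have e: "{w, v} \<in> T"
  proof -
    have "Suc (length xs - 2) < length xs" using len by simp
    hence "{xs ! (length xs - 2), xs ! Suc (length xs - 2)} \<in> T" using xs(1) unfolding walk_def by blast
    moreover have "Suc (length xs - 2) = length xs - 1" using len by simp
    ultimately show ?thesis unfolding w_def using xs(3) ne by (simp add: last_conv_nth)
  qed
  have "walk T (butlast xs)" unfolding walk_def
  proof (intro conjI allI impI)
    show "butlast xs \<noteq> []" using len by (cases xs) auto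
    fix i assume "Suc i < length (butlast xs)"
    thus "{butlast xs ! i, butlast xs ! Suc i} \<in> T" using xs(1) unfolding walk_def by (simp add: nth_butlast)
  qed
  moreover have "hd (butlast xs) = u" using len xs(2) by (cases xs) auto
  moreover have "last (butlast xs) = w"
  proof -
    have bne: "butlast xs \<noteq> []" using len by (cases xs) auto
    have "last (butlast xs) = butlast xs ! (length (butlast xs) - 1)" using bne by (simp add: last_conv_nth)
    also have "\<dots> = xs ! (length xs - 2)" using len by (simp add: nth_butlast numeral_2_eq_2)
    finally show ?thesis unfolding w_def .
  qed
  moreover have "length (butlast xs) \<le> Suc (k - 1)" using xs len by simp
  ultimately have "reach_within T (k - 1) u w" unfolding reach_within_def by blast
  moreover have "k \<ge> 1" using xs len by simp
  ultimately show ?thesis using e by blast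
qed

lemma reach_card:
  fixes a :: pt and E :: "pt set set"
  assumes fin: "finite E" and two: "\<And>e. e \<in> E \<Longrightarrow> \<exists>x y. e = {x, y} \<and> x \<noteq> y"
  defines "R \<equiv> {v. \<exists>k. reach_within E k a v}"
  shows "finite R \<and> card R \<le> card E + 1"
proof -
  define dist where "dist v = (LEAST k. reach_within E k a v)" for v
  have dist_r: "reach_within E (dist v) a v" if "v \<in> R" for v
    using that unfolding R_def dist_def by (auto intro: LeastI)
  have dist_le: "dist v \<le> k" if "reach_within E k a v" for v k
    unfolding dist_def using that by (simp add: Least_le)
  define pe where "pe v = (SOME e. \<exists>w. e = {w, v} \<and> e \<in> E \<and> dist w < dist v)" for v
  have pe: "\<exists>w. pe v = {w, v} \<and> pe v \<in> E \<and> dist w < dist v" if "v \<in> R - {a}" for v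
  proof -
    have vR: "v \<in> R" "a \<noteq> v" using that by auto
    obtain w where w: "dist v \<ge> 1" "reach_within E (dist v - 1) a w" "{w, v} \<in> E"
      using reach_pred[OF dist_r[OF vR(1)] vR(2)] by blast
    have "dist w < dist v" using dist_le[OF w(2)] w(1) by simp
    hence "\<exists>e. \<exists>w. e = {w, v} \<and> e \<in> E \<and> dist w < dist v" using w by blast
    thus ?thesis unfolding pe_def by (rule someI_ex)
  qed
  have inj: "inj_on pe (R - {a})"
  proof (rule inj_onI)
    fix u v assume u: "u \<in> R - {a}" and v: "v \<in> R - {a}" and eq: "pe u = pe v"
    show "u = v"
    proof (rule ccontr)
      assume ne: "u \<noteq> v"
      obtain w1 where w1: "pe u = {w1, u}" "dist w1 < dist u" using pe[OF u] by blast
      obtain w2 where w2: "pe v = {w2, v}" "dist w2 < dist v" using pe[OF v] by blast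
      have "w1 = v" "w2 = u" using w1 w2 eq ne by (auto simp: doubleton_eq_iff)
      thus False using w1 w2 by simp
    qed
  qed
  have sub: "pe ` (R - {a}) \<subseteq> E" using pe by blast
  have RE: "R \<subseteq> insert a (\<Union>E)"
  proof
    fix v assume v: "v \<in> R"
    show "v \<in> insert a (\<Union>E)"
    proof (cases "v = a")
      case False
      then have "v \<in> R - {a}" using v by simp
      then obtain w where "{w, v} \<in> E" using pe[of v] by metis
      thus ?thesis by blast
    qed simp
  qed
  have finR: "finite R"
  proof (rule finite_subset[OF RE])
    show "finite (insert a (\<Union> E))" using fin two by (metis finite.insertI finite_Union finite.emptyI finite_insert)
  qed
  have "card (R - {a}) \<le> card E"
    using card_inj_on_le[OF inj sub fin] .
  moreover have "card R \<le> card (R - {a}) + 1"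
    using finR by (metis card_Diff1_le card_Diff_singleton_if le_SucI Suc_eq_plus1 le_refl card.remove add.commute order_refl)
  ultimately show ?thesis using finR by simp
qed

lemma reach_closed:
  assumes "reach_within E k a x" "{x, y} \<in> E"
  shows "\<exists>k. reach_within E k a y"
  using reach_step[OF assms] by blast




lemma support_frontier:
  fixes V :: "pt set"
  assumes "finite V" "m \<in> frontier (convex hull V)"
  shows "\<exists>l. l \<noteq> 0 \<and> (\<forall>y\<in>convex hull V. l \<bullet> m \<le> l \<bullet> y)"
proof -
  let ?S = "convex hull V"
  have cv: "convex ?S" by (rule convex_convex_hull)
  have cl: "closed ?S" by (rule compact_imp_closed[OF finite_imp_compact_convex_hull[OF assms(1)]])
  have "m \<in> closure ?S" using assms(2) unfolding frontier_def by blast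
  hence mS: "m \<in> ?S" by (simp only: closure_closed[OF cl])
  have mi: "m \<notin> interior ?S" using assms(2) unfolding frontier_def by blast
  show ?thesis
  proof (cases "interior ?S = {}")
    case True
    obtain l c where l: "l \<noteq> 0" "?S \<subseteq> {x. l \<bullet> x = c}"
      using empty_interior_subset_hyperplane[OF cv True] by blast
    have "\<forall>y\<in>?S. l \<bullet> m \<le> l \<bullet> y"
    proof
      fix y assume "y \<in> ?S"
      hence "l \<bullet> y = c" using l(2) by blast
      moreover have "l \<bullet> m = c" using mS l(2) by blast
      ultimately show "l \<bullet> m \<le> l \<bullet> y" by simp
    qed
    thus ?thesis using l(1) by blast
  next
    case False
    then have "rel_interior ?S = interior ?S" by (rule rel_interior_nonempty_interior)
    then have mr: "m \<notin> rel_interior ?S" using mi by simp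
    show ?thesis
      by (rule supporting_hyperplane_rel_boundary[OF cv mS mr]) auto
  qed
qed

lemma inner2: "(l::pt) \<bullet> z = l$1 * z$1 + l$2 * z$2"
  by (simp add: inner_vec_def sum_2)

lemma half_plane:
  fixes V :: "pt set"
  assumes fin: "finite V" and gp: "general_position V" and be: "boundary_edge V a b"
  shows "\<exists>K. \<forall>y\<in>V - {a, b}. K * det2 (b - a) (y - a) > 0"
proof -
  have a: "a \<in> V" and b: "b \<in> V" and ab: "a \<noteq> b"
    and seg: "closed_segment a b \<subseteq> frontier (convex hull V)"
    using be unfolding boundary_edge_def by auto
  define m where "m = (1 - 1/2) *\<^sub>R a + (1/2::real) *\<^sub>R b"
  have "m \<in> closed_segment a b" unfolding m_def in_segment(1) by (intro exI[of _ "1/2"]) simp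
  then have "m \<in> frontier (convex hull V)" using seg by blast
  then obtain l where l0: "l \<noteq> 0" and sup: "\<forall>y\<in>convex hull V. l \<bullet> m \<le> l \<bullet> y"
    using support_frontier[OF fin] by blast
  have la: "l \<bullet> m \<le> l \<bullet> a" using sup a by (simp add: hull_inc)
  have lb: "l \<bullet> m \<le> l \<bullet> b" using sup b by (simp add: hull_inc)
  have lm: "l \<bullet> m = (l \<bullet> a + l \<bullet> b) / 2" unfolding m_def by (simp add: inner_add_right)
  have s: "(l \<bullet> a - l \<bullet> m) + (l \<bullet> b - l \<bullet> m) = 0" using lm by (simp add: field_simps)
  have nn: "l \<bullet> a - l \<bullet> m \<ge> 0" "l \<bullet> b - l \<bullet> m \<ge> 0" using la lb by simp_all
  have eqa: "l \<bullet> a = l \<bullet> m" using s nn add_nonneg_eq_0_iff by fastforce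
  have eqb: "l \<bullet> b = l \<bullet> m" using s nn add_nonneg_eq_0_iff by fastforce
  define e where "e = b - a"
  have le: "l \<bullet> e = 0" unfolding e_def using eqa eqb by (simp add: inner_diff_right)
  have e0: "e \<noteq> 0" unfolding e_def using ab by simp
  have ee: "e$1*e$1 + e$2*e$2 > 0"
  proof -
    have "e$1 \<noteq> 0 \<or> e$2 \<noteq> 0" using e0 by (auto simp: vec_eq_iff forall_2)
    hence "e$1*e$1 > 0 \<or> e$2*e$2 > 0" by (metis not_real_square_gt_zero)
    moreover have "e$1*e$1 \<ge> 0" "e$2*e$2 \<ge> 0" by simp_all
    ultimately show ?thesis by linarith
  qed
  show ?thesis
  proof (intro exI[of _ "det2 e l"] ballI)
    fix y assume y: "y \<in> V - {a, b}"
    have ly: "l \<bullet> (y - a) > 0"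
    proof -
      have "l \<bullet> m \<le> l \<bullet> y" using sup y by (simp add: hull_inc)
      hence ge: "l \<bullet> (y - a) \<ge> 0" using eqa by (simp add: inner_diff_right)
      have "l \<bullet> (y - a) \<noteq> 0"
      proof
        assume ly0: "l \<bullet> (y - a) = 0"
        have "det2 (b - a) (y - a) = 0"
        proof -
          have l12: "l$1 \<noteq> 0 \<or> l$2 \<noteq> 0" using l0 by (auto simp: vec_eq_iff forall_2)
          have q1: "l$1 * e$1 + l$2 * e$2 = 0" using le by (simp add: inner2)
          have q2: "l$1 * (y-a)$1 + l$2 * (y-a)$2 = 0" using ly0 by (simp add: inner2)
          have i1: "l$1 * (e$1 * (y-a)$2 - e$2 * (y-a)$1) = (y-a)$2 * (l$1*e$1 + l$2*e$2) - e$2 * (l$1*(y-a)$1 + l$2*(y-a)$2)"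
            by (simp add: algebra_simps)
          have i2: "l$2 * (e$1 * (y-a)$2 - e$2 * (y-a)$1) = e$1 * (l$1*(y-a)$1 + l$2*(y-a)$2) - (y-a)$1 * (l$1*e$1 + l$2*e$2)"
            by (simp add: algebra_simps)
          have h1: "l$1 * (e$1 * (y-a)$2 - e$2 * (y-a)$1) = 0" using i1 q1 q2 by simp
          have h2: "l$2 * (e$1 * (y-a)$2 - e$2 * (y-a)$1) = 0" using i2 q1 q2 by simp
          have "e$1 * (y-a)$2 - e$2 * (y-a)$1 = 0" using h1 h2 l12 by (metis mult_eq_0_iff)
          thus ?thesis unfolding det2_def e_def by simp
        qed
        hence "collinear {a, b, y}" by (rule det2_collinear)
        moreover have "\<not> collinear {a, b, y}"
        proof -
          have "y \<in> V" "y \<noteq> a" "y \<noteq> b" using y by auto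
          thus ?thesis using gp[unfolded general_position_def, rule_format, of a b y] a b ab by blast
        qed
        ultimately show False by simp
      qed
      thus ?thesis using ge by simp
    qed
    have "det2 e l * det2 e (y - a) = (e$1*e$1 + e$2*e$2) * (l \<bullet> (y - a)) - (l \<bullet> e) * (e \<bullet> (y - a))"
      by (rule det2_inner)
    also have "\<dots> > 0" using le ee ly by simp
    finally show "det2 e l * det2 (b - a) (y - a) > 0" unfolding e_def .
  qed
qed




locale fan =
  fixes V :: "pt set" and a b :: pt and K :: real
  assumes fin: "finite V" and gp: "general_position V" and aV: "a \<in> V" and bV: "b \<in> V"
    and ab: "a \<noteq> b"
    and half: "\<forall>y\<in>V - {a, b}. K * det2 (b - a) (y - a) > 0"
begin

definition dt :: "pt \<Rightarrow> pt \<Rightarrow> real" where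
  "dt p q = K * det2 (p - a) (q - a)"

abbreviation W where "W \<equiv> V - {a, b}"

definition rk :: "pt \<Rightarrow> nat" where
  "rk p = card {q \<in> W. dt q p > 0}"

lemma dt_anti: "dt p q = - dt q p"
  unfolding dt_def using det2_anti[of "p - a" "q - a"] by simp

lemma dt_self: "dt p p = 0"
  unfolding dt_def by (simp add: det2_self)

lemma ncol: "p \<in> V \<Longrightarrow> q \<in> V \<Longrightarrow> r \<in> V \<Longrightarrow> p \<noteq> q \<Longrightarrow> q \<noteq> r \<Longrightarrow> p \<noteq> r \<Longrightarrow> \<not> collinear {p, q, r}"
  using gp unfolding general_position_def by blast

lemma dt_ne:
  assumes "p \<in> W" "q \<in> W" "p \<noteq> q"
  shows "dt p q \<noteq> 0"
proof -
  have K: "K \<noteq> 0" using half assms(1) by fastforce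
  have "det2 (p - a) (q - a) \<noteq> 0"
  proof
    assume "det2 (p - a) (q - a) = 0"
    hence "collinear {a, p, q}" by (rule det2_collinear)
    moreover have "\<not> collinear {a, p, q}" using ncol[of a p q] assms aV by auto
    ultimately show False by simp
  qed
  thus ?thesis using K unfolding dt_def by simp
qed

lemma dt_trans:
  assumes "p \<in> W" "q \<in> W" "r \<in> W" "dt p q > 0" "dt q r > 0"
  shows "dt p r > 0"
proof -
  define E where "E y = K * det2 (b - a) (y - a)" for y
  have Ep: "E p > 0" "E q > 0" "E r > 0" using half assms(1-3) unfolding E_def by auto
  have id: "dt p q * E r + dt q r * E p + dt r p * E q
      = K * K * (det2 (p-a) (q-a) * det2 (b-a) (r-a) + det2 (q-a) (r-a) * det2 (b-a) (p-a)
          + det2 (r-a) (p-a) * det2 (b-a) (q-a))"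
    unfolding dt_def E_def by (simp add: algebra_simps)
  also have "\<dots> = 0" using det2_ident[of "p-a" "q-a" "b-a" "r-a"] by simp
  finally have "dt r p * E q = - (dt p q * E r + dt q r * E p)" by simp
  moreover have "dt p q * E r + dt q r * E p > 0" using assms(4,5) Ep by (simp add: add_pos_pos)
  ultimately have "dt r p * E q < 0" by simp
  hence "dt r p < 0" using Ep(2) by (simp add: mult_less_0_iff)
  thus ?thesis using dt_anti[of p r] by simp
qed

lemma finW: "finite W" using fin by simp

lemma rk_lt:
  assumes "p \<in> W" "q \<in> W" "dt p q > 0"
  shows "rk p < rk q"
  unfolding rk_def
proof (rule psubset_card_mono)
  show "finite {x \<in> W. dt x q > 0}" using finW by simp
  show "{x \<in> W. dt x p > 0} \<subset> {x \<in> W. dt x q > 0}"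
  proof
    show "{x \<in> W. dt x p > 0} \<subseteq> {x \<in> W. dt x q > 0}" using dt_trans assms by blast
    have "p \<notin> {x \<in> W. dt x p > 0}" by (simp add: dt_self)
    moreover have "p \<in> {x \<in> W. dt x q > 0}" using assms by simp
    ultimately show "{x \<in> W. dt x p > 0} \<noteq> {x \<in> W. dt x q > 0}" by blast
  qed
qed

lemma rk_iff:
  assumes "p \<in> W" "q \<in> W"
  shows "dt p q > 0 \<longleftrightarrow> rk p < rk q"
proof
  assume "dt p q > 0" thus "rk p < rk q" using rk_lt assms by blast
next
  assume h: "rk p < rk q"
  then have "p \<noteq> q" by auto
  then have "dt p q \<noteq> 0" using dt_ne assms by blast
  moreover have "\<not> dt q p > 0" using rk_lt[OF assms(2,1)] h by linarith
  ultimately show "dt p q > 0" using dt_anti[of p q] by linarith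
qed

lemma rk_neg:
  assumes "p \<in> W" "q \<in> W"
  shows "dt p q < 0 \<longleftrightarrow> rk q < rk p"
  using rk_iff[OF assms(2,1)] dt_anti[of p q] by linarith

lemma rk_inj:
  assumes "p \<in> W" "q \<in> W" "rk p = rk q"
  shows "p = q"
proof (rule ccontr)
  assume "p \<noteq> q"
  then have "dt p q \<noteq> 0" using dt_ne assms by blast
  then have "dt p q > 0 \<or> dt q p > 0" using dt_anti[of p q] by linarith
  thus False using rk_lt assms by fastforce
qed

lemma seg_dt:
  assumes "z \<in> closed_segment p q"
  shows "\<exists>u. 0 \<le> u \<and> u \<le> 1 \<and> dt x z = (1 - u) * dt x p + u * dt x q"
proof -
  obtain u where u: "0 \<le> u" "u \<le> 1" "z = (1 - u) *\<^sub>R p + u *\<^sub>R q"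
    using assms in_segment(1) by blast
  have "dt x z = (1 - u) * dt x p + u * dt x q"
    unfolding dt_def u(3) det2_lin by (simp add: algebra_simps)
  thus ?thesis using u by blast
qed

lemma seg_pos:
  assumes "z \<in> closed_segment p q" "dt x p > 0" "dt x q > 0"
  shows "dt x z > 0"
proof -
  obtain u where u: "0 \<le> u" "u \<le> 1" "dt x z = (1 - u) * dt x p + u * dt x q"
    using seg_dt[OF assms(1)] by blast
  show ?thesis
  proof (cases "u = 0")
    case True thus ?thesis using u assms by simp
  next
    case False
    then have "u * dt x q > 0" using u assms by simp
    moreover have "(1 - u) * dt x p \<ge> 0" using u assms by simp
    ultimately show ?thesis using u by linarith
  qed
qed

lemma seg_neg:
  assumes "z \<in> closed_segment p q" "dt x p < 0" "dt x q < 0"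
  shows "dt x z < 0"
proof -
  obtain u where u: "0 \<le> u" "u \<le> 1" "dt x z = (1 - u) * dt x p + u * dt x q"
    using seg_dt[OF assms(1)] by blast
  show ?thesis
  proof (cases "u = 0")
    case True thus ?thesis using u assms by simp
  next
    case False
    then have "u * dt x q < 0" using u assms by (simp add: mult_pos_neg)
    moreover have "(1 - u) * dt x p \<le> 0" using u assms by (simp add: mult_nonneg_nonpos)
    ultimately show ?thesis using u by linarith
  qed
qed

lemma seg_nonneg:
  assumes "z \<in> closed_segment p q" "dt x p \<ge> 0" "dt x q \<ge> 0"
  shows "dt x z \<ge> 0"
proof -
  obtain u where u: "0 \<le> u" "u \<le> 1" "dt x z = (1 - u) * dt x p + u * dt x q"
    using seg_dt[OF assms(1)] by blast
  thus ?thesis using assms by simp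
qed

lemma seg_a:
  assumes "z \<in> closed_segment a x"
  shows "dt x z = 0"
proof -
  obtain u where u: "dt x z = (1 - u) * dt x a + u * dt x x"
    using seg_dt[OF assms] by blast
  thus ?thesis by (simp add: dt_self dt_def)
qed

lemma seg_end:
  assumes "z \<in> closed_segment p q" "dt q z = 0" "dt q p \<noteq> 0"
  shows "z = q"
proof -
  obtain u where u: "0 \<le> u" "u \<le> 1" "z = (1 - u) *\<^sub>R p + u *\<^sub>R q"
    using assms(1) in_segment(1) by blast
  have "dt q z = (1 - u) * dt q p + u * dt q q"
    unfolding dt_def u(3) det2_lin by (simp add: algebra_simps)
  then have "(1 - u) * dt q p = 0" using assms(2) by (simp add: dt_self)
  then have "u = 1" using assms(3) by simp
  thus ?thesis using u by simp
qed

end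



lemma gp_ncol: "general_position V \<Longrightarrow> p \<in> V \<Longrightarrow> q \<in> V \<Longrightarrow> r \<in> V \<Longrightarrow> p \<noteq> q \<Longrightarrow> q \<noteq> r \<Longrightarrow> p \<noteq> r \<Longrightarrow> \<not> collinear {p, q, r}"
  unfolding general_position_def by blast

lemma hull2: "convex hull {p, q} = closed_segment p (q::pt)"
  by (simp add: segment_convex_hull)

lemma star_in_trees:
  fixes V :: "pt set"
  assumes fin: "finite V" and gp: "general_position V" and bV: "b \<in> V"
  shows "(\<lambda>v. {b, v}) ` (V - {b}) \<in> trees_le V 4"
proof -
  let ?S = "(\<lambda>v. {b, v}) ` (V - {b})"
  have sub: "?S \<subseteq> complete_edges V" unfolding complete_edges_def using bV by blast
  have inj: "inj_on (\<lambda>v. {b, v}) (V - {b})" by (auto simp: inj_on_def doubleton_eq_iff)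
  have card: "card ?S = card V - 1" using card_image[OF inj] fin bV by simp
  have r1: "reach_within ?S 1 u b" if "u \<in> V" for u
  proof (cases "u = b")
    case True thus ?thesis by (simp add: reach_refl)
  next
    case False
    hence "{u, b} \<in> ?S" using that by (auto simp: insert_commute)
    thus ?thesis by (rule reach_edge)
  qed
  have r: "reach_within ?S 4 u v" if "u \<in> V" "v \<in> V" for u v
  proof -
    have "reach_within ?S (1 + 1) u v" using reach_trans[OF r1[OF that(1)] reach_sym[OF r1[OF that(2)]]] .
    thus ?thesis by (rule reach_mono) simp
  qed
  have conn: "graph_connected V ?S" unfolding graph_connected_def using r by blast
  have diam: "diam_le V ?S 4" unfolding diam_le_def using r by blast
  have nc: "noncrossing ?S" unfolding noncrossing_def
  proof (intro ballI impI subsetI)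
    fix e f z assume e: "e \<in> ?S" and f: "f \<in> ?S" and ne: "e \<noteq> f" and z: "z \<in> convex hull e \<inter> convex hull f"
    obtain u where u: "u \<in> V - {b}" "e = {b, u}" using e by blast
    obtain v where v: "v \<in> V - {b}" "f = {b, v}" using f by blast
    have uv: "u \<noteq> v" using u v ne by auto
    have "z = b"
      using common_endpoint[OF gp_ncol[OF gp bV, of u v]] u v uv z by (auto simp: hull2)
    thus "z \<in> e \<inter> f" using u v by simp
  qed
  show ?thesis unfolding trees_le_def spanning_tree_def using sub card conn diam nc by blast
qed

lemma tree_hits_star:
  fixes V :: "pt set"
  assumes T: "T \<in> trees_le V k" and aV: "a \<in> V" and bV: "b \<in> V" and ab: "a \<noteq> b"
  shows "T \<inter> (\<lambda>v. {b, v}) ` (V - {b}) \<noteq> {}"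
proof -
  have sub: "T \<subseteq> complete_edges V" and conn: "graph_connected V T"
    using T unfolding trees_le_def spanning_tree_def by auto
  obtain k where "reach_within T k a b" using conn aV bV unfolding graph_connected_def by blast
  then obtain w where w: "{w, b} \<in> T"
    using reach_pred ab by metis
  then have "{w, b} \<in> complete_edges V" using sub by blast
  then have "w \<in> V" "w \<noteq> b" unfolding complete_edges_def by (auto simp: doubleton_eq_iff)
  then have "{w, b} \<in> (\<lambda>v. {b, v}) ` (V - {b})" by (auto simp: insert_commute)
  thus ?thesis using w by blast
qed




locale fan_tree = fan +
  fixes D :: "pt set"
  assumes DW: "D \<subseteq> V - {a, b}" and Dne: "D \<noteq> {}"
begin

abbreviation Cs where "Cs \<equiv> (V - {a, b}) - D"

definition up :: "pt \<Rightarrow> pt set" where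
  "up c = {d \<in> D. rk c < rk d}"

definition del :: "pt \<Rightarrow> pt" where
  "del c = (if up c \<noteq> {} then (SOME d. d \<in> up c \<and> rk d = Min (rk ` up c))
            else (SOME d. d \<in> D \<and> rk d = Max (rk ` D)))"

lemma finD: "finite D" using DW fin finite_subset by blast

lemma del_props:
  assumes c: "c \<in> Cs"
  shows "del c \<in> D"
    "up c \<noteq> {} \<Longrightarrow> rk c < rk (del c) \<and> (\<forall>x\<in>D. rk c < rk x \<longrightarrow> rk (del c) \<le> rk x)"
    "up c = {} \<Longrightarrow> (\<forall>x\<in>D. rk x \<le> rk (del c) \<and> rk x < rk c)"
proof -
  have fu: "finite (up c)" using finD unfolding up_def by simp
  have A: "del c \<in> up c \<and> rk (del c) = Min (rk ` up c)" if ne: "up c \<noteq> {}"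
  proof -
    have "Min (rk ` up c) \<in> rk ` up c" using fu ne by simp
    then have "\<exists>d. d \<in> up c \<and> rk d = Min (rk ` up c)" by auto
    then have "(SOME d. d \<in> up c \<and> rk d = Min (rk ` up c)) \<in> up c \<and> rk (SOME d. d \<in> up c \<and> rk d = Min (rk ` up c)) = Min (rk ` up c)"
      by (rule someI_ex)
    moreover have "del c = (SOME d. d \<in> up c \<and> rk d = Min (rk ` up c))" using ne by (simp add: del_def)
    ultimately show ?thesis by simp
  qed
  have B: "del c \<in> D \<and> rk (del c) = Max (rk ` D)" if e: "up c = {}"
  proof -
    have "Max (rk ` D) \<in> rk ` D" using finD Dne by simp
    then have "\<exists>d. d \<in> D \<and> rk d = Max (rk ` D)" by auto
    then have "(SOME d. d \<in> D \<and> rk d = Max (rk ` D)) \<in> D \<and> rk (SOME d. d \<in> D \<and> rk d = Max (rk ` D)) = Max (rk ` D)"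
      by (rule someI_ex)
    moreover have "del c = (SOME d. d \<in> D \<and> rk d = Max (rk ` D))" using e by (simp add: del_def)
    ultimately show ?thesis by simp
  qed
  show "del c \<in> D"
  proof (cases "up c = {}")
    case True thus ?thesis using B by blast
  next
    case False thus ?thesis using A unfolding up_def by blast
  qed
  show "rk c < rk (del c) \<and> (\<forall>x\<in>D. rk c < rk x \<longrightarrow> rk (del c) \<le> rk x)" if ne: "up c \<noteq> {}"
  proof -
    have "rk c < rk (del c)" using A[OF ne] unfolding up_def by simp
    moreover have "rk (del c) \<le> rk x" if "x \<in> D" "rk c < rk x" for x
    proof -
      have "x \<in> up c" using that unfolding up_def by simp
      thus ?thesis using A[OF ne] fu by simp
    qed
    ultimately show ?thesis by blast
  qed
  show "\<forall>x\<in>D. rk x \<le> rk (del c) \<and> rk x < rk c" if e: "up c = {}"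
  proof
    fix x assume x: "x \<in> D"
    have "rk x \<le> rk (del c)" using B[OF e] finD x by simp
    moreover have "\<not> rk c < rk x" using e x unfolding up_def by auto
    moreover have "rk x \<noteq> rk c"
    proof
      assume "rk x = rk c"
      moreover have "x \<in> V - {a, b}" using x DW by blast
      moreover have "c \<in> V - {a, b}" using c by blast
      ultimately have "x = c" using rk_inj by blast
      thus False using x c by simp
    qed
    ultimately show "rk x \<le> rk (del c) \<and> rk x < rk c" by simp
  qed
qed

lemma del_W:
  assumes "c \<in> Cs" shows "del c \<in> V - {a, b}"
proof -
  have "del c \<in> D" by (rule del_props(1)[OF assms])
  thus ?thesis by (rule subsetD[OF DW])
qed

lemma del_ne:
  assumes "c \<in> Cs" shows "del c \<noteq> c"
proof -
  have "del c \<in> D" by (rule del_props(1)[OF assms])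
  moreover have "c \<notin> D" using assms by simp
  ultimately show ?thesis by auto
qed

lemma no_between:
  assumes c: "c \<in> Cs" and d: "d \<in> D" and ne: "d \<noteq> del c"
  shows "(rk d < rk c \<and> rk d < rk (del c)) \<or> (rk c < rk d \<and> rk (del c) < rk d)"
proof -
  have dW: "d \<in> V - {a, b}" using d DW by blast
  have n1: "rk d \<noteq> rk (del c)" using rk_inj[OF dW del_W[OF c]] ne by blast
  have n2: "rk d \<noteq> rk c"
  proof
    assume "rk d = rk c"
    moreover have "c \<in> V - {a, b}" using c by blast
    ultimately have "d = c" using rk_inj[OF dW] by blast
    thus False using d c by simp
  qed
  show ?thesis
  proof (cases "up c = {}")
    case True
    have "rk d \<le> rk (del c)" "rk d < rk c" using del_props(3)[OF c True] d by auto
    thus ?thesis using n1 by linarith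
  next
    case False
    have h: "rk c < rk (del c)" "\<forall>x\<in>D. rk c < rk x \<longrightarrow> rk (del c) \<le> rk x"
      using del_props(2)[OF c False] by auto
    show ?thesis using h(1) h(2)[rule_format, OF d] n1 n2 by linarith
  qed
qed

lemma disjoint_int:
  assumes c: "c \<in> Cs" and c': "c' \<in> Cs" and ne: "c \<noteq> c'" and dne: "del c \<noteq> del c'"
  shows "(rk c < rk c' \<and> rk c < rk (del c') \<and> rk (del c) < rk c' \<and> rk (del c) < rk (del c'))
       \<or> (rk c' < rk c \<and> rk c' < rk (del c) \<and> rk (del c') < rk c \<and> rk (del c') < rk (del c))"
proof -
  have W: "c \<in> V - {a,b}" "c' \<in> V - {a,b}" "del c \<in> V - {a,b}" "del c' \<in> V - {a,b}"
    using c c' del_W[OF c] del_W[OF c'] by auto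
  have D: "del c \<in> D" "del c' \<in> D" using del_props(1) c c' by auto
  have n1: "rk c \<noteq> rk c'" using rk_inj[OF W(1) W(2)] ne by blast
  have n2: "rk (del c) \<noteq> rk (del c')" using rk_inj[OF W(3) W(4)] dne by blast
  have n3: "rk c \<noteq> rk (del c')" using rk_inj[OF W(1) W(4)] c D(2) by blast
  have n4: "rk c' \<noteq> rk (del c)" using rk_inj[OF W(2) W(3)] c' D(1) by blast
  show ?thesis
  proof (cases "up c = {}")
    case True
    note h = del_props(3)[OF c True]
    have h1: "rk (del c') \<le> rk (del c)" "rk (del c') < rk c" "rk (del c) < rk c" using h D by auto
    show ?thesis
    proof (cases "up c' = {}")
      case True
      note h' = del_props(3)[OF c' True]
      have "rk (del c) \<le> rk (del c')" using h' D by auto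
      thus ?thesis using h1 n2 by simp
    next
      case False
      note h' = del_props(2)[OF c' False]
      have "rk c' < rk (del c')" using h' by simp
      hence "rk (del c') < rk (del c) \<and> rk c' < rk c \<and> rk c' < rk (del c) \<and> rk (del c') < rk c"
        using h1 n2 by linarith
      thus ?thesis by blast
    qed
  next
    case False
    note h = del_props(2)[OF c False]
    have h0: "rk c < rk (del c)" using h by simp
    show ?thesis
    proof (cases "up c' = {}")
      case True
      note h' = del_props(3)[OF c' True]
      have "rk (del c) \<le> rk (del c')" "rk (del c) < rk c'" "rk (del c') < rk c'" using h' D by auto
      hence "rk c < rk c' \<and> rk c < rk (del c') \<and> rk (del c) < rk c' \<and> rk (del c) < rk (del c')"
        using h0 n2 by linarith
      thus ?thesis by blast
    next
      case False
      note h' = del_props(2)[OF c' False]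
      have h0': "rk c' < rk (del c')" using h' by simp
      have 1: "rk c < rk (del c') \<Longrightarrow> rk (del c) \<le> rk (del c')" using h D by auto
      have 2: "rk c' < rk (del c) \<Longrightarrow> rk (del c') \<le> rk (del c)" using h' D by auto
      show ?thesis
      proof (cases "rk (del c) < rk c'")
        case True
        hence "rk c < rk c' \<and> rk c < rk (del c') \<and> rk (del c) < rk c' \<and> rk (del c) < rk (del c')"
          using h0 h0' by linarith
        thus ?thesis by blast
      next
        case F1: False
        show ?thesis
        proof (cases "rk (del c') < rk c")
          case True
          hence "rk c' < rk c \<and> rk c' < rk (del c) \<and> rk (del c') < rk c \<and> rk (del c') < rk (del c)"
            using h0 h0' by linarith
          thus ?thesis by blast
        next
          case F2: False
          have "rk c' < rk (del c)" using F1 n4 by linarith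
          have "rk c < rk (del c')" using F2 n3 by linarith
          have "rk (del c) \<le> rk (del c')" using 1 \<open>rk c < rk (del c')\<close> .
          moreover have "rk (del c') \<le> rk (del c)" using 2 \<open>rk c' < rk (del c)\<close> .
          ultimately show ?thesis using n2 by linarith
        qed
      qed
    qed
  qed
qed

definition T :: "pt set set" where
  "T = insert {a, b} ((\<lambda>d. {a, d}) ` D \<union> (\<lambda>c. {c, del c}) ` Cs)"

end



context fan_tree
begin

lemma DW': "d \<in> D \<Longrightarrow> d \<in> V - {a, b}"
  using DW by (rule subsetD)

lemma CsW: "c \<in> Cs \<Longrightarrow> c \<in> V - {a, b}"
  by simp

lemma dt_b: "y \<in> V - {a, b} \<Longrightarrow> dt b y > 0"
  using half unfolding dt_def by blast

lemma nc_ab_ad: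
  assumes d: "d \<in> D" and z: "z \<in> closed_segment a b" "z \<in> closed_segment a d"
  shows "z = a"
proof -
  have "d \<in> V" "d \<noteq> a" "d \<noteq> b" using DW'[OF d] by auto
  thus ?thesis using common_endpoint[OF ncol[OF aV bV] z] ab by blast
qed

lemma nc_ad_ad:
  assumes d: "d \<in> D" and d': "d' \<in> D" and ne: "d \<noteq> d'"
    and z: "z \<in> closed_segment a d" "z \<in> closed_segment a d'"
  shows "z = a"
proof -
  have "d \<in> V" "d \<noteq> a" "d' \<in> V" "d' \<noteq> a" using DW'[OF d] DW'[OF d'] by auto
  thus ?thesis using common_endpoint[OF ncol[OF aV] z] ne by blast
qed

lemma nc_ab_cd:
  assumes c: "c \<in> Cs" and z: "z \<in> closed_segment a b" "z \<in> closed_segment c (del c)"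
  shows False
proof -
  have "dt b z = 0" using seg_a[OF z(1)] .
  moreover have "dt b z > 0" using seg_pos[OF z(2) dt_b[OF CsW[OF c]] dt_b[OF del_W[OF c]]] .
  ultimately show False by simp
qed

lemma nc_ad_cd:
  assumes d: "d \<in> D" and c: "c \<in> Cs" and z: "z \<in> closed_segment a d" "z \<in> closed_segment c (del c)"
  shows "z = d \<and> d = del c"
proof (cases "d = del c")
  case True
  have "dt (del c) z = 0" using seg_a z(1) True by simp
  moreover have "dt (del c) c \<noteq> 0" using dt_ne[OF del_W[OF c] CsW[OF c] del_ne[OF c]] .
  ultimately have "z = del c" using seg_end[OF z(2)] by blast
  thus ?thesis using True by simp
next
  case False
  have dz: "dt d z = 0" using seg_a[OF z(1)] .
  have dW: "d \<in> V - {a, b}" by (rule DW'[OF d])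
  have cW: "c \<in> V - {a, b}" by (rule CsW[OF c])
  have eW: "del c \<in> V - {a, b}" by (rule del_W[OF c])
  from no_between[OF c d False] show ?thesis
  proof
    assume h: "rk d < rk c \<and> rk d < rk (del c)"
    have "dt d c > 0" using rk_iff[OF dW cW] h by simp
    moreover have "dt d (del c) > 0" using rk_iff[OF dW eW] h by simp
    ultimately have "dt d z > 0" using seg_pos[OF z(2)] by blast
    thus ?thesis using dz by simp
  next
    assume h: "rk c < rk d \<and> rk (del c) < rk d"
    have "dt d c < 0" using rk_neg[OF dW cW] h by simp
    moreover have "dt d (del c) < 0" using rk_neg[OF dW eW] h by simp
    ultimately have "dt d z < 0" using seg_neg[OF z(2)] by blast
    thus ?thesis using dz by simp
  qed
qed

lemma sep:
  assumes W: "p \<in> V - {a,b}" "q \<in> V - {a,b}" "p' \<in> V - {a,b}" "q' \<in> V - {a,b}"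
    and r: "rk p < rk p'" "rk p < rk q'" "rk q < rk p'" "rk q < rk q'"
    and z: "z \<in> closed_segment p q" "z \<in> closed_segment p' q'"
  shows False
proof (cases "rk p' < rk q'")
  case True
  have "dt p' p < 0" using rk_neg[OF W(3) W(1)] r by simp
  moreover have "dt p' q < 0" using rk_neg[OF W(3) W(2)] r by simp
  ultimately have n: "dt p' z < 0" using seg_neg[OF z(1)] by blast
  have "dt p' p' \<ge> 0" by (simp add: dt_self)
  moreover have "dt p' q' \<ge> 0" using rk_iff[OF W(3) W(4)] True by simp
  ultimately have "dt p' z \<ge> 0" using seg_nonneg[OF z(2)] by blast
  thus False using n by simp
next
  case False
  have "dt q' p < 0" using rk_neg[OF W(4) W(1)] r by simp
  moreover have "dt q' q < 0" using rk_neg[OF W(4) W(2)] r by simp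
  ultimately have n: "dt q' z < 0" using seg_neg[OF z(1)] by blast
  have "rk p' \<noteq> rk q' \<or> p' = q'" using rk_inj[OF W(3) W(4)] by blast
  hence "rk q' < rk p' \<or> p' = q'" using False by linarith
  hence "dt q' p' \<ge> 0" using rk_iff[OF W(4) W(3)] by (auto simp: dt_self)
  moreover have "dt q' q' \<ge> 0" by (simp add: dt_self)
  ultimately have "dt q' z \<ge> 0" using seg_nonneg[OF z(2)] by blast
  thus False using n by simp
qed

lemma nc_cd_cd:
  assumes c: "c \<in> Cs" and c': "c' \<in> Cs" and ne: "c \<noteq> c'"
    and z: "z \<in> closed_segment c (del c)" "z \<in> closed_segment c' (del c')"
  shows "z = del c \<and> del c = del c'"
proof (cases "del c = del c'")
  case True
  have W: "c \<in> V" "c' \<in> V" "del c \<in> V" using c c' del_W[OF c] by auto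
  have n: "del c \<noteq> c" "del c \<noteq> c'" using del_ne[OF c] del_ne[OF c'] True by auto
  have z1: "z \<in> closed_segment (del c) c" using z(1) by (simp add: closed_segment_commute)
  have z2: "z \<in> closed_segment (del c) c'" using z(2) True by (simp add: closed_segment_commute)
  have "z = del c" using common_endpoint[OF ncol[OF W(3) W(1) W(2)] z1 z2] n ne by blast
  thus ?thesis using True by simp
next
  case False
  have W: "c \<in> V - {a,b}" "c' \<in> V - {a,b}" "del c \<in> V - {a,b}" "del c' \<in> V - {a,b}"
    using CsW[OF c] CsW[OF c'] del_W[OF c] del_W[OF c'] by auto
  from disjoint_int[OF c c' ne False] show ?thesis
  proof
    assume h: "rk c < rk c' \<and> rk c < rk (del c') \<and> rk (del c) < rk c' \<and> rk (del c) < rk (del c')"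
    show ?thesis using sep[OF W(1) W(3) W(2) W(4) h[THEN conjunct1] h[THEN conjunct2, THEN conjunct1]
        h[THEN conjunct2, THEN conjunct2, THEN conjunct1] h[THEN conjunct2, THEN conjunct2, THEN conjunct2] z] by simp
  next
    assume h: "rk c' < rk c \<and> rk c' < rk (del c) \<and> rk (del c') < rk c \<and> rk (del c') < rk (del c)"
    show ?thesis using sep[OF W(2) W(4) W(1) W(3) h[THEN conjunct1] h[THEN conjunct2, THEN conjunct1]
        h[THEN conjunct2, THEN conjunct2, THEN conjunct1] h[THEN conjunct2, THEN conjunct2, THEN conjunct2] z(2) z(1)] by simp
  qed
qed

end



context fan_tree
begin

lemma T_cases:
  assumes "e \<in> T"
  obtains "e = {a, b}" | d where "d \<in> D" "e = {a, d}" | c where "c \<in> Cs" "e = {c, del c}"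
proof -
  have "e = {a, b} \<or> e \<in> (\<lambda>d. {a, d}) ` D \<or> e \<in> (\<lambda>c. {c, del c}) ` Cs"
    using assms unfolding T_def by simp
  moreover have "e \<in> (\<lambda>d. {a, d}) ` D \<Longrightarrow> thesis" using that(2) by (elim imageE) simp
  moreover have "e \<in> (\<lambda>c. {c, del c}) ` Cs \<Longrightarrow> thesis" using that(3) by (elim imageE) simp
  ultimately show thesis using that(1) by blast
qed

lemma T_sub: "T \<subseteq> complete_edges V"
proof
  fix e assume "e \<in> T"
  then show "e \<in> complete_edges V"
  proof (cases rule: T_cases)
    case 1 thus ?thesis unfolding complete_edges_def using aV bV ab by blast
  next
    case (2 d)
    have "d \<in> V" "d \<noteq> a" using DW'[OF 2(1)] by auto
    thus ?thesis unfolding complete_edges_def using aV 2(2) by blast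
  next
    case (3 c)
    have "c \<in> V" "del c \<in> V" "del c \<noteq> c" using CsW[OF 3(1)] del_W[OF 3(1)] del_ne[OF 3(1)] by auto
    thus ?thesis unfolding complete_edges_def using 3(2) by blast
  qed
qed

definition g :: "pt \<Rightarrow> pt set" where
  "g v = (if v = b then {a, b} else if v \<in> D then {a, v} else {v, del v})"

lemma T_img: "T = g ` (V - {a})"
proof
  show "T \<subseteq> g ` (V - {a})"
  proof
    fix e assume "e \<in> T"
    then show "e \<in> g ` (V - {a})"
    proof (cases rule: T_cases)
      case 1
      have "g b = {a, b}" unfolding g_def by simp
      thus ?thesis using 1 bV ab by (metis DiffI imageI singletonD)
    next
      case (2 d)
      have dW: "d \<in> V - {a, b}" by (rule DW'[OF 2(1)])
      have "g d = {a, d}" unfolding g_def using dW 2(1) by simp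
      moreover have "d \<in> V - {a}" using dW by simp
      ultimately show ?thesis using 2(2) by (metis imageI)
    next
      case (3 c)
      have cW: "c \<in> V - {a, b}" "c \<notin> D" using 3(1) by simp_all
      have "g c = {c, del c}" unfolding g_def using cW by simp
      moreover have "c \<in> V - {a}" using cW by simp
      ultimately show ?thesis using 3(2) by (metis imageI)
    qed
  qed
next
  show "g ` (V - {a}) \<subseteq> T"
  proof
    fix e assume "e \<in> g ` (V - {a})"
    then obtain v where v: "v \<in> V" "v \<noteq> a" "e = g v" by blast
    show "e \<in> T"
    proof (cases "v = b")
      case True thus ?thesis using v unfolding g_def T_def by simp
    next
      case F: False
      show ?thesis
      proof (cases "v \<in> D")
        case True thus ?thesis using v F unfolding g_def T_def by simp
      next
        case False
        hence "v \<in> Cs" using v F by simp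
        thus ?thesis using v F False unfolding g_def T_def by simp
      qed
    qed
  qed
qed

lemma g_inj: "inj_on g (V - {a})"
proof (rule inj_onI)
  fix u v assume u: "u \<in> V - {a}" and v: "v \<in> V - {a}" and eq: "g u = g v"
  have key: "\<And>x. x \<in> V - {a} \<Longrightarrow> (x = b \<or> x \<in> D) \<Longrightarrow> g x = {a, x}"
    unfolding g_def by auto
  have key2: "\<And>x. x \<in> V - {a} \<Longrightarrow> \<not> (x = b \<or> x \<in> D) \<Longrightarrow> g x = {x, del x} \<and> x \<in> Cs"
    unfolding g_def by auto
  show "u = v"
  proof (cases "u = b \<or> u \<in> D")
    case U: True
    show ?thesis
    proof (cases "v = b \<or> v \<in> D")
      case True
      hence "{a, u} = {a, v}" using key u v U eq by metis
      thus ?thesis using u v by (auto simp: doubleton_eq_iff)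
    next
      case False
      have "{a, u} = {v, del v}" "v \<in> Cs" using key[OF u U] key2[OF v False] eq by auto
      hence "v \<in> {a, u}" by blast
      thus ?thesis using v U \<open>v \<in> Cs\<close> by auto
    qed
  next
    case U: False
    have gu: "g u = {u, del u}" "u \<in> Cs" using key2[OF u U] by auto
    show ?thesis
    proof (cases "v = b \<or> v \<in> D")
      case True
      have "{u, del u} = {a, v}" using gu key[OF v True] eq by simp
      hence "u \<in> {a, v}" by blast
      thus ?thesis using u True gu(2) by auto
    next
      case False
      have gv: "g v = {v, del v}" "v \<in> Cs" using key2[OF v False] by auto
      have "{u, del u} = {v, del v}" using gu gv eq by simp
      hence "u \<in> {v, del v}" by blast
      moreover have "u \<noteq> del v" using gu(2) del_props(1)[OF gv(2)] by auto
      ultimately show ?thesis by blast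
    qed
  qed
qed

lemma T_card: "card T = card V - 1"
  using card_image[OF g_inj] T_img fin aV by simp

lemma T_reach: "u \<in> V \<Longrightarrow> reach_within T 2 u a"
proof -
  assume u: "u \<in> V"
  have ab_T: "{a, b} \<in> T" unfolding T_def by simp
  have ad_T: "d \<in> D \<Longrightarrow> {a, d} \<in> T" for d unfolding T_def by blast
  have cd_T: "c \<in> Cs \<Longrightarrow> {c, del c} \<in> T" for c unfolding T_def by blast
  have r1: "reach_within T 1 x a" if "x = b \<or> x \<in> D" for x
  proof -
    have "{a, x} \<in> T"
    proof (cases "x = b")
      case True thus ?thesis using ab_T by simp
    next
      case False thus ?thesis using that ad_T by simp
    qed
    hence "{x, a} \<in> T" by (simp add: insert_commute)
    thus ?thesis by (rule reach_edge)
  qed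
  show ?thesis
  proof (cases "u = a")
    case True thus ?thesis by (simp add: reach_refl)
  next
    case F: False
    show ?thesis
    proof (cases "u = b \<or> u \<in> D")
      case True thus ?thesis using r1 reach_mono by fastforce
    next
      case False
      hence c: "u \<in> Cs" using u F by simp
      have "reach_within T (1 + 1) u a"
        using reach_trans[OF reach_edge[OF cd_T[OF c]] r1[of "del u"]] del_props(1)[OF c] by blast
      thus ?thesis by (simp add: numeral_2_eq_2)
    qed
  qed
qed

lemma T_nc_pair:
  assumes e: "e \<in> T" and f: "f \<in> T" and ne: "e \<noteq> f"
    and z: "z \<in> convex hull e" "z \<in> convex hull f"
  shows "z \<in> e \<inter> f"
  using e
proof (cases rule: T_cases)
  case 1
  have ze: "z \<in> closed_segment a b" using z(1) 1 by (simp add: hull2)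
  from f show ?thesis
  proof (cases rule: T_cases)
    case 1 thus ?thesis using ne \<open>e = {a, b}\<close> by simp
  next
    case (2 d)
    have "z = a" using nc_ab_ad[OF 2(1) ze] z(2) 2(2) by (simp add: hull2)
    thus ?thesis using \<open>e = {a, b}\<close> 2(2) by simp
  next
    case (3 c)
    have False using nc_ab_cd[OF 3(1) ze] z(2) 3(2) by (simp add: hull2)
    thus ?thesis ..
  qed
next
  case (2 d)
  have ze: "z \<in> closed_segment a d" using z(1) 2 by (simp add: hull2)
  from f show ?thesis
  proof (cases rule: T_cases)
    case 1
    have "z = a" using nc_ab_ad[OF 2(1) _ ze] z(2) 1 by (simp add: hull2)
    thus ?thesis using 1 2(2) by simp
  next
    case (2 d')
    have "d \<noteq> d'" using ne \<open>e = {a, d}\<close> 2(2) by auto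
    hence "z = a" using nc_ad_ad[OF \<open>d \<in> D\<close> 2(1) _ ze] z(2) 2(2) by (simp add: hull2)
    thus ?thesis using \<open>e = {a, d}\<close> 2(2) by simp
  next
    case (3 c)
    have "z = d \<and> d = del c" using nc_ad_cd[OF \<open>d \<in> D\<close> 3(1) ze] z(2) 3(2) by (simp add: hull2)
    thus ?thesis using \<open>e = {a, d}\<close> 3(2) by simp
  qed
next
  case (3 c)
  have ze: "z \<in> closed_segment c (del c)" using z(1) 3 by (simp add: hull2)
  from f show ?thesis
  proof (cases rule: T_cases)
    case 1
    have False using nc_ab_cd[OF \<open>c \<in> Cs\<close> _ ze] z(2) 1 by (simp add: hull2)
    thus ?thesis ..
  next
    case (2 d)
    have "z = d \<and> d = del c" using nc_ad_cd[OF 2(1) \<open>c \<in> Cs\<close> _ ze] z(2) 2(2) by (simp add: hull2)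
    thus ?thesis using \<open>e = {c, del c}\<close> 2(2) by simp
  next
    case (3 c')
    have "c \<noteq> c'" using ne \<open>e = {c, del c}\<close> 3(2) by auto
    hence "z = del c \<and> del c = del c'" using nc_cd_cd[OF \<open>c \<in> Cs\<close> 3(1) _ ze] z(2) 3(2) by (simp add: hull2)
    thus ?thesis using \<open>e = {c, del c}\<close> 3(2) by simp
  qed
qed

lemma T_trees: "T \<in> trees_le V 4"
proof -
  have r: "reach_within T 4 u v" if "u \<in> V" "v \<in> V" for u v
    using reach_trans[OF T_reach[OF that(1)] reach_sym[OF T_reach[OF that(2)]]] by simp
  have nc: "noncrossing T" unfolding noncrossing_def using T_nc_pair by blast
  show ?thesis unfolding trees_le_def spanning_tree_def graph_connected_def diam_le_def
    using T_sub T_card nc r by blast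
qed

end



lemma finite_complete_edges: "finite V \<Longrightarrow> finite (complete_edges V)"
proof -
  assume f: "finite V"
  have "complete_edges V \<subseteq> Pow V" unfolding complete_edges_def by auto
  thus ?thesis using f finite_subset by blast
qed

lemma core:
  fixes V :: "pt set" and B :: "pt set set" and a b :: pt
  assumes fin: "finite V" and gp: "general_position V"
    and blk: "is_blocker V (trees_le V 4) B"
    and be: "boundary_edge V a b" and nab: "{a, b} \<notin> B"
  shows "degree B b = 1"
proof -
  have aV: "a \<in> V" and bV: "b \<in> V" and ab: "a \<noteq> b" using be unfolding boundary_edge_def by auto
  have Bsub: "B \<subseteq> complete_edges V" and Bbl: "blocks B (trees_le V 4)"
    and Bmin: "\<And>B'. B' \<subseteq> complete_edges V \<Longrightarrow> blocks B' (trees_le V 4) \<Longrightarrow> card B \<le> card B'"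
    using blk unfolding is_blocker_def by auto
  have finB: "finite B" using Bsub finite_complete_edges[OF fin] finite_subset by blast
  define S where "S = (\<lambda>v. {b, v}) ` (V - {b})"
  have S: "S \<in> trees_le V 4" unfolding S_def by (rule star_in_trees[OF fin gp bV])
  have Ssub: "S \<subseteq> complete_edges V" using S unfolding trees_le_def spanning_tree_def by auto
  have Scard: "card S = card V - 1" using S unfolding trees_le_def spanning_tree_def by auto
  have Sbl: "blocks S (trees_le V 4)" unfolding blocks_def S_def
    using tree_hits_star[OF _ aV bV ab] by blast
  have cardB: "card B \<le> card V - 1" using Bmin[OF Ssub Sbl] Scard by simp
  have "B \<inter> S \<noteq> {}" using Bbl S unfolding blocks_def by blast
  then obtain e where e: "e \<in> B" "b \<in> e" unfolding S_def by blast
  define Bb where "Bb = {e \<in> B. b \<in> e}"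
  have finBb: "finite Bb" using finB unfolding Bb_def by simp
  have deg: "degree B b = card Bb" unfolding degree_def Bb_def by simp
  have ge1: "card Bb \<ge> 1" using e finBb unfolding Bb_def by (metis (mono_tags, lifting) One_nat_def Suc_leI card_gt_0_iff empty_iff mem_Collect_eq)
  have le1: "card Bb \<le> 1"
  proof (rule ccontr)
    assume "\<not> card Bb \<le> 1"
    hence ge2: "card Bb \<ge> 2" by simp
    define B0 where "B0 = {e \<in> B. b \<notin> e}"
    have finB0: "finite B0" using finB unfolding B0_def by simp
    have "B = B0 \<union> Bb" "B0 \<inter> Bb = {}" unfolding B0_def Bb_def by auto
    hence "card B = card B0 + card Bb" using card_Un_disjoint finB0 finBb by metis
    hence cB0: "card B0 + 2 \<le> card V - 1" using cardB ge2 by linarith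
    have two: "\<And>e. e \<in> B0 \<Longrightarrow> \<exists>x y. e = {x, y} \<and> x \<noteq> y"
      using Bsub unfolding B0_def complete_edges_def by blast
    define R where "R = {v. \<exists>k. reach_within B0 k a v}"
    have Rc: "finite R \<and> card R \<le> card B0 + 1" unfolding R_def by (rule reach_card[OF finB0 two])
    have aR: "a \<in> R" unfolding R_def using reach_refl by blast
    have Rclosed: "\<And>x y. x \<in> R \<Longrightarrow> {x, y} \<in> B0 \<Longrightarrow> y \<in> R"
      unfolding R_def using reach_closed by blast
    have "\<not> (V - {b} \<subseteq> R)"
    proof
      assume "V - {b} \<subseteq> R"
      hence "card (V - {b}) \<le> card R" using Rc card_mono by blast
      moreover have "card (V - {b}) = card V - 1" using fin bV by simp
      ultimately show False using Rc cB0 by linarith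
    qed
    then obtain d where d: "d \<in> V" "d \<noteq> b" "d \<notin> R" by blast
    define D where "D = (V - {a, b}) - R"
    have dD: "d \<in> D" unfolding D_def using d aR by auto
    have DW: "D \<subseteq> V - {a, b}" unfolding D_def by blast
    obtain K where K: "\<forall>y\<in>V - {a, b}. K * det2 (b - a) (y - a) > 0"
      using half_plane[OF fin gp be] by blast
    interpret ft: fan_tree V a b K D
      by unfold_locales (use fin gp aV bV ab K DW dD in auto)
    have TT: "ft.T \<in> trees_le V 4" by (rule ft.T_trees)
    have "B \<inter> ft.T = {}"
    proof (rule ccontr)
      assume "B \<inter> ft.T \<noteq> {}"
      then obtain f where f: "f \<in> B" "f \<in> ft.T" by blast
      from f(2) show False
      proof (cases rule: ft.T_cases)
        case 1 thus False using f nab by simp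
      next
        case (2 x)
        have xW: "x \<in> V - {a, b}" "x \<notin> R" using 2(1) unfolding D_def by auto
        have "{a, x} \<in> B0" using f 2(2) xW ab unfolding B0_def by auto
        hence "x \<in> R" using Rclosed[OF aR] by blast
        thus False using xW by simp
      next
        case (3 c)
        have cR: "c \<in> R" "c \<in> V - {a, b}" using 3(1) unfolding D_def by auto
        have dc: "ft.del c \<in> D" by (rule ft.del_props(1)[OF 3(1)])
        have dcW: "ft.del c \<in> V - {a, b}" "ft.del c \<notin> R" using dc unfolding D_def by auto
        have "{c, ft.del c} \<in> B0" using f 3(2) cR dcW unfolding B0_def by auto
        hence "ft.del c \<in> R" using Rclosed[OF cR(1)] by blast
        thus False using dcW by simp
      qed
    qed
    moreover have "B \<inter> ft.T \<noteq> {}" using Bbl TT unfolding blocks_def by blast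
    ultimately show False by simp
  qed
  show ?thesis using deg ge1 le1 by simp
qed

theorem lemma1:
  fixes V :: "pt set" and B :: "pt set set" and a b c :: pt
  assumes "finite V" and "general_position V"
    and "is_blocker V (trees_le V 4) B"
    and "boundary_vertex V b"
    and "a \<noteq> c"
    and "boundary_edge V a b" and "boundary_edge V b c"
    and "{a, b} \<notin> B \<or> {b, c} \<notin> B"
  shows "degree B b = 1"
proof -
  have cb: "boundary_edge V c b" using assms(7) unfolding boundary_edge_def
    by (auto simp: closed_segment_commute)
  from assms(8) show ?thesis
  proof
    assume "{a, b} \<notin> B"
    thus ?thesis using core[OF assms(1-3) assms(6)] by blast
  next
    assume "{b, c} \<notin> B"
    hence "{c, b} \<notin> B" by (simp add: insert_commute)
    thus ?thesis using core[OF assms(1-3) cb] by blast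
  qed
qed


end
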